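(* Let $A\in\mathbb{R}^{n\times n}$ be a symmetric irreducible invertible $M$-matrix. Let $u\in\mathbb{R}^n$ be a nonzero vector with $u\le 0$ (entrywise), and set $\alpha=u^TA^{-1}u$. Then the $(n+1)\times(n+1)$ matrix $B=\begin{pmatrix}A & u\\ u^T & \alpha\end{pmatrix}$ is a $P_{\#}$-matrix.
   Context: A $Z$-matrix is a real square matrix with nonpositive off-diagonal entries. An $M$-matrix is a matrix of the form $sI-C$ with $C\ge 0$ entrywise and $s\ge\rho(C)$ (spectral radius); it is invertible iff $s>\rho(C)$. $A$ is reducible if it is permutationally similar to $\begin{pmatrix}B&0\\C&D\end{pmatrix}$ with $B,D$ square (or $n=1$ and $A=0$), irreducible otherwise. A matrix $M$ is a $P_{\#}$-matrix if: $x\in R(M)$ (range of $M$) and $x_i(Mx)_i\le 0$ for all $i$ imply $x=0$. *)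

theory Defs
  imports "Jordan_Normal_Form.Spectral_Radius" "Jordan_Normal_Form.Gauss_Jordan_Elimination"
begin

definition Z_matrix :: "real mat \<Rightarrow> bool" where
  "Z_matrix A \<longleftrightarrow> square_mat A \<and>
     (\<forall>i < dim_row A. \<forall>j < dim_row A. i \<noteq> j \<longrightarrow> A $$ (i, j) \<le> 0)"

definition M_matrix :: "real mat \<Rightarrow> bool" where
  "M_matrix A \<longleftrightarrow> square_mat A \<and>
     (\<exists>s C. C \<in> carrier_mat (dim_row A) (dim_row A) \<and>
        (\<forall>i < dim_row A. \<forall>j < dim_row A. C $$ (i, j) \<ge> 0) \<and>
        A = s \<cdot>\<^sub>m 1\<^sub>m (dim_row A) - C \<and>
        s \<ge> spectral_radius (map_mat complex_of_real C))"

text \<open>Reducible: permutationally similar (P A P^T, entry (i,j) = A (p i, p j)) to a block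
  lower triangular matrix with square diagonal blocks of sizes k and n-k (0<k<n),
  i.e. the upper right k x (n-k) block vanishes; or n = 1 and A = 0.\<close>
definition reducible_mat :: "real mat \<Rightarrow> bool" where
  "reducible_mat A \<longleftrightarrow>
     (\<exists>p k. p permutes {..<dim_row A} \<and> 0 < k \<and> k < dim_row A \<and>
        (\<forall>i < k. \<forall>j. k \<le> j \<and> j < dim_row A \<longrightarrow> A $$ (p i, p j) = 0))
     \<or> (dim_row A = 1 \<and> A = 0\<^sub>m 1 1)"

definition irreducible_mat :: "real mat \<Rightarrow> bool" where
  "irreducible_mat A \<longleftrightarrow> square_mat A \<and> \<not> reducible_mat A"

definition P_sharp_matrix :: "real mat \<Rightarrow> bool" where
  "P_sharp_matrix M \<longleftrightarrow> square_mat M \<and>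
     (\<forall>x \<in> carrier_vec (dim_row M).
        (\<exists>y \<in> carrier_vec (dim_col M). x = M *\<^sub>v y) \<and>
        (\<forall>i < dim_row M. x $ i * (M *\<^sub>v x) $ i \<le> 0) \<longrightarrow> x = 0\<^sub>v (dim_row M))"

end

theory Submission
  imports Defs
begin

lemma pow_mat_add':
  fixes D :: "'a::semiring_1 mat"
  assumes D: "D \<in> carrier_mat n n"
  shows "D ^\<^sub>m (a + b) = D ^\<^sub>m a * D ^\<^sub>m b"
proof (induct b)
  case 0
  then show ?case using D by simp
next
  case (Suc b)
  have "D ^\<^sub>m (a + Suc b) = (D ^\<^sub>m a * D ^\<^sub>m b) * D" using Suc by simp
  also have "\<dots> = D ^\<^sub>m a * (D ^\<^sub>m b * D)"
    by (rule assoc_mult_mat[of _ n n _ n _ n], insert D, auto)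
  finally show ?case by simp
qed

lemma pow_mat_transpose_sym:
  fixes D :: "'a::comm_semiring_1 mat"
  assumes D: "D \<in> carrier_mat n n" and sym: "transpose_mat D = D"
  shows "transpose_mat (D ^\<^sub>m k) = D ^\<^sub>m k"
proof (induct k)
  case 0
  then show ?case using D by simp
next
  case (Suc k)
  have "transpose_mat (D ^\<^sub>m Suc k) = transpose_mat D * transpose_mat (D ^\<^sub>m k)"
    using transpose_mult[of "D ^\<^sub>m k" n n D n] D by simp
  also have "\<dots> = D ^\<^sub>m 1 * D ^\<^sub>m k" using Suc sym D by simp
  also have "\<dots> = D ^\<^sub>m (1 + k)" using pow_mat_add'[OF D] by metis
  finally show ?case by simp
qed

lemma cs_sum:
  fixes a b :: "nat \<Rightarrow> real"
  shows "(\<Sum>i\<in>I. a i * b i)^2 \<le> (\<Sum>i\<in>I. a i * a i) * (\<Sum>i\<in>I. b i * b i)"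
proof -
  define N where "N = (\<Sum>i\<in>I. a i * a i)"
  define p where "p = (\<Sum>i\<in>I. a i * b i)"
  define B where "B = (\<Sum>i\<in>I. b i * b i)"
  have N0: "N \<ge> 0" unfolding N_def by (intro sum_nonneg, auto)
  have "0 \<le> (\<Sum>i\<in>I. (N * b i - p * a i)^2)" by (intro sum_nonneg, auto)
  also have "\<dots> = (\<Sum>i\<in>I. N*N * (b i * b i) - 2 * N * p * (a i * b i) + p * p * (a i * a i))"
    by (intro sum.cong, auto simp: power2_eq_square algebra_simps)
  also have "\<dots> = N*N*B - 2*N*p*p + p*p*N"
    unfolding N_def B_def p_def sum.distrib sum_subtractf sum_distrib_left[symmetric] by simp
  finally have "0 \<le> N * (N * B - p * p)" by (simp add: algebra_simps)
  hence "N = 0 \<or> p * p \<le> N * B" using N0 by (metis le_less mult_eq_0_iff zero_le_mult_iff diff_ge_0_iff_ge not_less)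
  moreover have "N = 0 \<Longrightarrow> p = 0"
  proof -
    assume "N = 0"
    hence "\<forall>i\<in>I. a i * a i = 0 \<or> infinite I" unfolding N_def
      using sum_nonneg_eq_0_iff[of I "\<lambda>i. a i * a i"] by auto
    thus "p = 0" unfolding p_def by (cases "finite I", auto)
  qed
  ultimately show ?thesis unfolding N_def p_def B_def power2_eq_square by auto
qed

lemma cs_vec:
  fixes a b :: "real vec"
  assumes "a \<in> carrier_vec n" "b \<in> carrier_vec n"
  shows "(a \<bullet> b)^2 \<le> (a \<bullet> a) * (b \<bullet> b)"
  using cs_sum[of "\<lambda>i. a $ i" "\<lambda>i. b $ i" "{0..<n}"] assms unfolding scalar_prod_def by auto

lemma smult_mat_mult_vec:
  fixes A :: "'a::comm_ring_1 mat"
  assumes A: "A \<in> carrier_mat nr nc" and v: "v \<in> carrier_vec nc"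
  shows "(k \<cdot>\<^sub>m A) *\<^sub>v v = k \<cdot>\<^sub>v (A *\<^sub>v v)"
  by (rule eq_vecI, insert A v, auto simp: scalar_prod_def sum_distrib_left ac_simps)

lemma abs_mat_vec_bound:
  fixes M :: "real mat"
  assumes M: "M \<in> carrier_mat n n" and v: "v \<in> carrier_vec n"
    and b: "\<And>i j. i < n \<Longrightarrow> j < n \<Longrightarrow> \<bar>M $$ (i,j)\<bar> \<le> c"
  shows "\<bar>v \<bullet> (M *\<^sub>v v)\<bar> \<le> c * (\<Sum>i\<in>{0..<n}. \<bar>v $ i\<bar>)^2"
proof -
  define S where "S = (\<Sum>i\<in>{0..<n}. \<bar>v $ i\<bar>)"
  have wi: "\<bar>(M *\<^sub>v v) $ i\<bar> \<le> c * S" if i: "i < n" for i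
  proof -
    have "(M *\<^sub>v v) $ i = (\<Sum>j\<in>{0..<n}. M $$ (i,j) * v $ j)"
      using M v i by (auto simp: scalar_prod_def)
    hence "\<bar>(M *\<^sub>v v) $ i\<bar> \<le> (\<Sum>j\<in>{0..<n}. \<bar>M $$ (i,j) * v $ j\<bar>)"
      by (simp add: sum_abs)
    also have "\<dots> \<le> (\<Sum>j\<in>{0..<n}. c * \<bar>v $ j\<bar>)"
      by (intro sum_mono, insert b i, auto simp: abs_mult intro: mult_right_mono)
    finally show ?thesis unfolding S_def sum_distrib_left .
  qed
  have "\<bar>v \<bullet> (M *\<^sub>v v)\<bar> = \<bar>\<Sum>i\<in>{0..<n}. v $ i * (M *\<^sub>v v) $ i\<bar>"
    using M by (simp add: scalar_prod_def)
  also have "\<dots> \<le> (\<Sum>i\<in>{0..<n}. \<bar>v $ i\<bar> * \<bar>(M *\<^sub>v v) $ i\<bar>)"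
    by (metis (no_types, lifting) abs_mult sum.cong sum_abs)
  also have "\<dots> \<le> (\<Sum>i\<in>{0..<n}. \<bar>v $ i\<bar> * (c * S))"
    by (intro sum_mono mult_left_mono, insert wi, auto)
  also have "\<dots> = c * S^2" unfolding S_def sum_distrib_right[symmetric] power2_eq_square by simp
  finally show ?thesis unfolding S_def .
qed

lemma map_real_pow: "(D::real mat) \<in> carrier_mat n n \<Longrightarrow> (map_mat complex_of_real D) ^\<^sub>m k = map_mat complex_of_real (D ^\<^sub>m k)"
  by (rule sym, rule of_real_hom.mat_hom_pow, assumption)

lemma rayleigh_le:
  fixes C :: "real mat"
  assumes C: "C \<in> carrier_mat n n" and sym: "transpose_mat C = C"
    and t: "spectral_radius (map_mat complex_of_real C) < t" and v: "v \<in> carrier_vec n"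
  shows "v \<bullet> (C *\<^sub>v v) \<le> t * (v \<bullet> v)"
proof (cases "n = 0")
  case True
  then show ?thesis using v C by (simp add: scalar_prod_def)
next
  case False
  hence n: "n > 0" by auto
  let ?Cc = "map_mat complex_of_real C"
  have Cc: "?Cc \<in> carrier_mat n n" using C by auto
  have "0 \<le> spectral_radius ?Cc" using spectral_radius_mem_max(1)[OF Cc n] by auto
  hence t0: "t > 0" using t by auto
  define D where "D = (1/t) \<cdot>\<^sub>m C"
  have D: "D \<in> carrier_mat n n" using C D_def by auto
  have Csym: "C $$ (j,i) = C $$ (i,j)" if "i < n" "j < n" for i j
    using that C arg_cong[OF sym, of "\<lambda>M. M $$ (i,j)"] by auto
  have symD: "transpose_mat D = D"
    unfolding D_def using C Csym by (intro eq_matI, auto)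
  let ?Dc = "map_mat complex_of_real D"
  have Dc: "?Dc \<in> carrier_mat n n" using D by auto
  have sr: "spectral_radius ?Dc < 1"
  proof -
    from spectral_radius_mem_max(1)[OF Dc n] obtain e where e: "e \<in> spectrum ?Dc"
      and eq: "spectral_radius ?Dc = norm e" by auto
    then obtain w where ev: "eigenvector ?Dc w e" unfolding spectrum_def eigenvalue_def by auto
    hence w: "w \<in> carrier_vec n" "w \<noteq> 0\<^sub>v n" and Dw: "?Dc *\<^sub>v w = e \<cdot>\<^sub>v w"
      unfolding eigenvector_def using Dc by auto
    have DcC: "?Dc = complex_of_real (1/t) \<cdot>\<^sub>m ?Cc" unfolding D_def by (intro eq_matI, auto)
    have "?Cc *\<^sub>v w = complex_of_real t \<cdot>\<^sub>v (?Dc *\<^sub>v w)"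
      unfolding DcC smult_mat_mult_vec[OF Cc w(1)] smult_smult_assoc
      using t0 by (simp flip: of_real_mult)
    also have "\<dots> = (complex_of_real t * e) \<cdot>\<^sub>v w" unfolding Dw smult_smult_assoc ..
    finally have "eigenvector ?Cc w (complex_of_real t * e)"
      unfolding eigenvector_def using w Cc by auto
    hence "complex_of_real t * e \<in> spectrum ?Cc" unfolding spectrum_def eigenvalue_def by auto
    from spectral_radius_mem_max(2)[OF Cc n imageI[OF this, of norm]] t
    have "norm (complex_of_real t * e) < t" by auto
    hence "t * norm e < t * 1" using t0 by (simp add: norm_mult)
    hence "norm e < 1" using t0 by (simp only: mult_less_cancel_left_pos)
    thus ?thesis using eq by simp
  qed
  from spectral_radius_jnf_norm_bound_less_1_upper_triangular[OF Dc sr]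
  obtain c where c: "\<And>k. norm_bound (?Dc ^\<^sub>m k) c" by auto
  have bnd: "\<bar>(D ^\<^sub>m k) $$ (i,j)\<bar> \<le> c" if "i < n" "j < n" for k i j
  proof -
    have "?Dc ^\<^sub>m k = map_mat complex_of_real (D ^\<^sub>m k)"
      using map_real_pow[OF D] by simp
    with c[of k] that D show ?thesis unfolding norm_bound_def by (auto simp: norm_of_real)
  qed
  define q where "q k = v \<bullet> (D ^\<^sub>m k *\<^sub>v v)" for k
  define S where "S = (\<Sum>i\<in>{0..<n}. \<bar>v $ i\<bar>)"
  define N where "N = v \<bullet> v"
  have qb: "q k \<le> c * S^2" for k
    using abs_mat_vec_bound[OF pow_carrier_mat[OF D, of k] v bnd[of _ _ k]]
    unfolding q_def S_def by auto
  have q2: "(q k)^2 \<le> N * q (2*k)" for k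
  proof -
    let ?P = "D ^\<^sub>m k"
    have P: "?P \<in> carrier_mat n n" using D by auto
    have Pv: "?P *\<^sub>v v \<in> carrier_vec n" using P v by auto
    have "q (2*k) = v \<bullet> (?P *\<^sub>v (?P *\<^sub>v v))"
      unfolding q_def mult_2 pow_mat_add'[OF D] using P v by simp
    also have "\<dots> = (transpose_mat ?P *\<^sub>v v) \<bullet> (?P *\<^sub>v v)"
      using transpose_vec_mult_scalar[OF P Pv v] by simp
    also have "\<dots> = (?P *\<^sub>v v) \<bullet> (?P *\<^sub>v v)" using pow_mat_transpose_sym[OF D symD] by simp
    finally show ?thesis using cs_vec[OF v Pv] unfolding q_def N_def by simp
  qed
  have q1: "q 1 = (1/t) * (v \<bullet> (C *\<^sub>v v))"
    unfolding q_def using D C v by (simp add: D_def smult_mat_mult_vec[OF C v])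
  show ?thesis
  proof (rule ccontr)
    assume "\<not> ?thesis"
    hence gt: "v \<bullet> (C *\<^sub>v v) > t * N" unfolding N_def by simp
    have Cv: "C *\<^sub>v v \<in> carrier_vec n" using C v by auto
    have N0: "N \<ge> 0" unfolding N_def scalar_prod_def by (auto intro: sum_nonneg)
    have "N \<noteq> 0"
    proof
      assume "N = 0"
      with cs_vec[OF v Cv] have "(v \<bullet> (C *\<^sub>v v))^2 \<le> 0" unfolding N_def by simp
      hence "v \<bullet> (C *\<^sub>v v) = 0" by simp
      with gt \<open>N = 0\<close> show False by simp
    qed
    with N0 have Npos: "N > 0" by simp
    define r where "r = q 1 / N"
    have "q 1 > N" using gt t0 unfolding q1 by (simp add: field_simps)
    hence r1: "r > 1" unfolding r_def using Npos by simp
    have grow: "N * r^(2^k) \<le> q (2^k)" for k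
    proof (induct k)
      case 0
      then show ?case unfolding r_def using Npos by simp
    next
      case (Suc k)
      have "0 \<le> N * r^(2^k)" using Npos r1 by simp
      hence "(N * r^(2^k))^2 \<le> (q (2^k))^2" using Suc by (intro power_mono, auto)
      also have "\<dots> \<le> N * q (2 * 2^k)" by (rule q2)
      finally have "N * (N * r^(2^Suc k)) \<le> N * q (2^Suc k)"
        by (simp add: power2_eq_square power_mult power_add mult_2 ac_simps)
      thus ?case using Npos by simp
    qed
    obtain k :: nat where k: "c * S^2 / (N * (r - 1)) < real k" using reals_Archimedean2 by blast
    have "c * S^2 < real k * (N * (r - 1))" using k Npos r1 by (simp add: pos_divide_less_eq)
    also have "\<dots> < N * (1 + real k * (r - 1))" using Npos by (simp add: algebra_simps)
    also have "\<dots> \<le> N * r^k"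
      using Bernoulli_inequality[of "r - 1" k] r1 Npos by (intro mult_left_mono, auto)
    also have "\<dots> \<le> N * r^(2^k)"
      using r1 Npos by (intro mult_left_mono power_increasing, auto intro: less_imp_le less_exp)
    also have "\<dots> \<le> c * S^2" using grow[of k] qb[of "2^k"] by simp
    finally show False by simp
  qed
qed

lemma self_prod_zero:
  fixes y :: "real vec"
  assumes y: "y \<in> carrier_vec n" and z: "y \<bullet> y = 0"
  shows "y = 0\<^sub>v n"
proof (rule eq_vecI)
  show "dim_vec y = dim_vec (0\<^sub>v n)" using y by simp
  fix i assume "i < dim_vec (0\<^sub>v n)"
  hence i: "i < n" by simp
  have "(\<Sum>j\<in>{0..<n}. y $ j * y $ j) = 0" using z y unfolding scalar_prod_def by simp
  hence "\<forall>j\<in>{0..<n}. y $ j * y $ j = 0"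
    using sum_nonneg_eq_0_iff[of "{0..<n}" "\<lambda>j. y $ j * y $ j"] by auto
  with i show "y $ i = 0\<^sub>v n $ i" by auto
qed

lemma sym_form:
  fixes A :: "real mat"
  assumes A: "A \<in> carrier_mat n n" and sym: "transpose_mat A = A"
    and x: "x \<in> carrier_vec n" and y: "y \<in> carrier_vec n"
  shows "x \<bullet> (A *\<^sub>v y) = y \<bullet> (A *\<^sub>v x)"
proof -
  have "x \<bullet> (A *\<^sub>v y) = (transpose_mat A *\<^sub>v x) \<bullet> y"
    using transpose_vec_mult_scalar[OF A y x] by simp
  also have "\<dots> = y \<bullet> (A *\<^sub>v x)" using sym comm_scalar_prod[of "A *\<^sub>v x" n y] A x y by simp
  finally show ?thesis .
qed

lemma psd_Mmat:
  fixes A :: "real mat"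
  assumes A: "A \<in> carrier_mat n n" and sym: "transpose_mat A = A"
    and M: "M_matrix A" and z: "z \<in> carrier_vec n"
  shows "0 \<le> z \<bullet> (A *\<^sub>v z)"
proof -
  from M A obtain s C where C: "C \<in> carrier_mat n n" and AC: "A = s \<cdot>\<^sub>m 1\<^sub>m n - C"
    and s: "s \<ge> spectral_radius (map_mat complex_of_real C)"
    unfolding M_matrix_def by auto
  have Aij: "A $$ (i,j) = (if i = j then s else 0) - C $$ (i,j)" if "i < n" "j < n" for i j
    using arg_cong[OF AC, of "\<lambda>M. M $$ (i,j)"] that C by auto
  have Csym: "transpose_mat C = C"
  proof (rule eq_matI)
    fix i j assume "i < dim_row C" "j < dim_col C"
    hence ij: "i < n" "j < n" using C by auto
    have "A $$ (j,i) = A $$ (i,j)" using arg_cong[OF sym, of "\<lambda>M. M $$ (i,j)"] ij A by auto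
    thus "transpose_mat C $$ (i,j) = C $$ (i,j)" using Aij[OF ij] Aij[of j i] ij C by (auto split: if_splits)
  qed (insert C, auto)
  have Cz: "C *\<^sub>v z \<in> carrier_vec n" using C z by auto
  have Az: "A *\<^sub>v z = s \<cdot>\<^sub>v z - C *\<^sub>v z"
    unfolding AC using C z
    by (simp add: minus_mult_distrib_mat_vec[of _ n n] smult_mat_mult_vec[of _ n n])
  have eq: "z \<bullet> (A *\<^sub>v z) = s * (z \<bullet> z) - z \<bullet> (C *\<^sub>v z)"
    unfolding Az using z Cz by (simp add: scalar_prod_minus_distrib[of _ n])
  have "z \<bullet> (C *\<^sub>v z) \<le> s * (z \<bullet> z)"
  proof (cases "z \<bullet> z = 0")
    case True
    with cs_vec[OF z Cz] have "(z \<bullet> (C *\<^sub>v z))^2 \<le> 0" by simp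
    hence "z \<bullet> (C *\<^sub>v z) = 0" by simp
    thus ?thesis using True by simp
  next
    case False
    have "z \<bullet> z \<ge> 0" unfolding scalar_prod_def by (auto intro: sum_nonneg)
    with False have N: "z \<bullet> z > 0" by simp
    show ?thesis
    proof (rule ccontr)
      assume "\<not> ?thesis"
      hence gt: "z \<bullet> (C *\<^sub>v z) / (z \<bullet> z) > s" using N by (simp add: field_simps)
      define t where "t = (z \<bullet> (C *\<^sub>v z) / (z \<bullet> z) + s) / 2"
      have "t > spectral_radius (map_mat complex_of_real C)" using gt s unfolding t_def by simp
      from rayleigh_le[OF C Csym this z]
      have "z \<bullet> (C *\<^sub>v z) / (z \<bullet> z) \<le> t" using N by (simp add: field_simps)
      have aux: "\<And>a b::real. b < a \<Longrightarrow> a \<le> (a+b)/2 \<Longrightarrow> False" by (simp add: field_simps)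
      with gt show False unfolding t_def using \<open>z \<bullet> (C *\<^sub>v z) / (z \<bullet> z) \<le> t\<close>
        unfolding t_def by blast
    qed
  qed
  thus ?thesis unfolding eq by simp
qed

lemma psd_zero:
  fixes A :: "real mat"
  assumes A: "A \<in> carrier_mat n n" and sym: "transpose_mat A = A"
    and psd: "\<And>z. z \<in> carrier_vec n \<Longrightarrow> 0 \<le> z \<bullet> (A *\<^sub>v z)"
    and z: "z \<in> carrier_vec n" and z0: "z \<bullet> (A *\<^sub>v z) = 0"
  shows "A *\<^sub>v z = 0\<^sub>v n"
proof -
  define y where "y = A *\<^sub>v z"
  have y: "y \<in> carrier_vec n" using A z y_def by auto
  have Ay: "A *\<^sub>v y \<in> carrier_vec n" using A y by auto
  define Y where "Y = y \<bullet> y"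
  define Q where "Q = y \<bullet> (A *\<^sub>v y)"
  have Q0: "Q \<ge> 0" using psd[OF y] Q_def by simp
  have Y0: "Y \<ge> 0" unfolding Y_def scalar_prod_def by (auto intro: sum_nonneg)
  have f: "(z - e \<cdot>\<^sub>v y) \<bullet> (A *\<^sub>v (z - e \<cdot>\<^sub>v y)) = e * e * Q - 2 * e * Y" for e
  proof -
    have ey: "e \<cdot>\<^sub>v y \<in> carrier_vec n" using y by simp
    have "A *\<^sub>v (z - e \<cdot>\<^sub>v y) = y - e \<cdot>\<^sub>v (A *\<^sub>v y)"
      using mult_minus_distrib_mat_vec[OF A z ey] mult_mat_vec[OF A y] y_def by simp
    hence "(z - e \<cdot>\<^sub>v y) \<bullet> (A *\<^sub>v (z - e \<cdot>\<^sub>v y))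
       = z \<bullet> y - e * (z \<bullet> (A *\<^sub>v y)) - e * (y \<bullet> y) + e * e * (y \<bullet> (A *\<^sub>v y))"
      using z y Ay ey
      by (simp add: minus_scalar_prod_distrib[of _ n] scalar_prod_minus_distrib[of _ n] algebra_simps)
    moreover have "z \<bullet> (A *\<^sub>v y) = y \<bullet> y" using sym_form[OF A sym z y] y_def by simp
    moreover have "z \<bullet> y = 0" using z0 y_def by simp
    ultimately show ?thesis unfolding Q_def Y_def by simp
  qed
  have "Y = 0"
  proof (rule ccontr)
    assume "Y \<noteq> 0"
    with Y0 have Yp: "Y > 0" by simp
    define e where "e = Y / (Q + 1)"
    have e: "e > 0" using Yp Q0 unfolding e_def by simp
    have "e * Q < Y" unfolding e_def using Yp Q0 by (simp add: field_simps)
    hence "e * (e * Q) < e * (2 * Y)" using e Yp by simp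
    hence "e * e * Q - 2 * e * Y < 0" by (simp add: algebra_simps)
    with f[of e] psd[of "z - e \<cdot>\<^sub>v y"] z y show False by simp
  qed
  thus ?thesis using self_prod_zero[OF y] Y_def y_def by simp
qed

lemma split_prod:
  fixes x v :: "real vec"
  assumes "x \<in> carrier_vec (Suc n)" "v \<in> carrier_vec (Suc n)"
  shows "x \<bullet> v = vec n (\<lambda>i. x $ i) \<bullet> vec n (\<lambda>i. v $ i) + x $ n * v $ n"
  using assms by (simp add: scalar_prod_def)

theorem mainTheorem4:
  fixes A :: "real mat" and u :: "real vec" and n :: nat
  assumes "A \<in> carrier_mat n n"
    and "transpose_mat A = A"
    and "irreducible_mat A"
    and "M_matrix A"
    and "invertible_mat A"
    and "u \<in> carrier_vec n"
    and "u \<noteq> 0\<^sub>v n"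
    and "\<forall>i < n. u $ i \<le> 0"
  shows "P_sharp_matrix
           (four_block_mat A (mat_of_cols n [u]) (mat_of_rows n [u])
              (mat 1 1 (\<lambda>_. u \<bullet> (the (mat_inverse A) *\<^sub>v u))))"
proof -
  note A = assms(1) and sym = assms(2) and u = assms(6)
  have "mat_inverse A \<noteq> None"
  proof
    assume "mat_inverse A = None"
    from mat_inverse(1)[OF A this, where b = "()"]
    have nU: "A \<notin> Units (ring_mat TYPE(real) n ())" .
    from assms(5) obtain Bi where AB: "A * Bi = 1\<^sub>m (dim_row A)" and BA: "Bi * A = 1\<^sub>m (dim_row Bi)"
      unfolding invertible_mat_def inverts_mat_def by auto
    have "dim_row Bi = dim_col A" using arg_cong[OF BA, of dim_col] by simp
    moreover have "dim_col Bi = dim_row A" using arg_cong[OF AB, of dim_col] by simp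
    ultimately have Bi: "Bi \<in> carrier_mat n n" using A by auto
    have "A \<in> Units (ring_mat TYPE(real) n ())"
      unfolding Units_def ring_mat_def using A Bi AB BA by auto
    with nU show False by simp
  qed
  then obtain Ai where inv: "mat_inverse A = Some Ai" by auto
  from mat_inverse(2)[OF A inv] have AAi: "A * Ai = 1\<^sub>m n" and AiA: "Ai * A = 1\<^sub>m n"
    and Ai: "Ai \<in> carrier_mat n n" by auto
  define w where "w = Ai *\<^sub>v u"
  have w: "w \<in> carrier_vec n" using Ai u w_def by auto
  have Aw: "A *\<^sub>v w = u" unfolding w_def using A Ai u AAi
    by (metis assoc_mult_mat_vec one_mult_mat_vec)
  define \<alpha> where "\<alpha> = u \<bullet> w"
  define B where "B = four_block_mat A (mat_of_cols n [u]) (mat_of_rows n [u])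
              (mat 1 1 (\<lambda>_. u \<bullet> (the (mat_inverse A) *\<^sub>v u)))"
  have B: "B \<in> carrier_mat (Suc n) (Suc n)" unfolding B_def using A by auto
  have Bij: "B $$ (i,j) = (if i < n then if j < n then A $$ (i,j) else u $ i
     else if j < n then u $ j else \<alpha>)" if "i < Suc n" "j < Suc n" for i j
    using that A u unfolding B_def \<alpha>_def w_def inv
    by (auto simp: mat_of_cols_index mat_of_rows_index)
  have Asym: "A $$ (j,i) = A $$ (i,j)" if "i < n" "j < n" for i j
    using arg_cong[OF sym, of "\<lambda>M. M $$ (i,j)"] that A by auto
  have Bsym: "transpose_mat B = B"
    by (rule eq_matI, insert B Asym, auto simp: Bij)
  define pr where "pr y = vec n (\<lambda>i. y $ i)" for y :: "real vec"
  have prc: "pr y \<in> carrier_vec n" for y unfolding pr_def by simp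
  have Bv_lt: "(B *\<^sub>v y) $ i = (A *\<^sub>v pr y) $ i + u $ i * y $ n"
    if y: "y \<in> carrier_vec (Suc n)" and i: "i < n" for y i
  proof -
    have "(B *\<^sub>v y) $ i = (\<Sum>j\<in>{0..<Suc n}. B $$ (i,j) * y $ j)"
      using B y i by (simp add: scalar_prod_def)
    also have "\<dots> = (\<Sum>j\<in>{0..<n}. B $$ (i,j) * y $ j) + B $$ (i,n) * y $ n" by simp
    also have "\<dots> = (\<Sum>j\<in>{0..<n}. A $$ (i,j) * y $ j) + u $ i * y $ n"
      using i by (simp add: Bij)
    also have "\<dots> = (A *\<^sub>v pr y) $ i + u $ i * y $ n"
      using A i by (simp add: scalar_prod_def pr_def)
    finally show ?thesis .
  qed
  have Bv_n: "(B *\<^sub>v y) $ n = u \<bullet> pr y + \<alpha> * y $ n"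
    if y: "y \<in> carrier_vec (Suc n)" for y
  proof -
    have "(B *\<^sub>v y) $ n = (\<Sum>j\<in>{0..<Suc n}. B $$ (n,j) * y $ j)"
      using B y by (simp add: scalar_prod_def)
    also have "\<dots> = (\<Sum>j\<in>{0..<n}. B $$ (n,j) * y $ j) + B $$ (n,n) * y $ n" by simp
    also have "\<dots> = (\<Sum>j\<in>{0..<n}. u $ j * y $ j) + \<alpha> * y $ n"
      by (simp add: Bij)
    also have "\<dots> = u \<bullet> pr y + \<alpha> * y $ n"
      using u by (simp add: scalar_prod_def pr_def)
    finally show ?thesis .
  qed
  show ?thesis unfolding B_def[symmetric] P_sharp_matrix_def
  proof (intro conjI ballI impI)
    show "square_mat B" using B by auto
    fix x assume x: "x \<in> carrier_vec (dim_row B)"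
      and hyp: "(\<exists>y\<in>carrier_vec (dim_col B). x = B *\<^sub>v y) \<and> (\<forall>i<dim_row B. x $ i * (B *\<^sub>v x) $ i \<le> 0)"
    have xc: "x \<in> carrier_vec (Suc n)" using x B by auto
    from hyp B obtain y where y: "y \<in> carrier_vec (Suc n)" and xy: "x = B *\<^sub>v y" by auto
    from hyp B have nonpos: "\<forall>i<Suc n. x $ i * (B *\<^sub>v x) $ i \<le> 0" by auto
    define p where "p = pr x"
    define \<tau> where "\<tau> = x $ n"
    have p: "p \<in> carrier_vec n" unfolding p_def by (rule prc)
    have Bxc: "B *\<^sub>v x \<in> carrier_vec (Suc n)" using B xc by auto
    have le0: "x \<bullet> (B *\<^sub>v x) \<le> 0"
    proof -
      have "x \<bullet> (B *\<^sub>v x) = (\<Sum>i\<in>{0..<Suc n}. x $ i * (B *\<^sub>v x) $ i)"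
      proof -
        have "dim_vec (B *\<^sub>v x) = Suc n" using B by simp
        thus ?thesis by (simp only: scalar_prod_def)
      qed
      also have "\<dots> \<le> 0" using nonpos by (intro sum_nonpos, auto)
      finally show ?thesis .
    qed
    have prBx: "pr (B *\<^sub>v x) = A *\<^sub>v p + \<tau> \<cdot>\<^sub>v u"
      by (rule eq_vecI, insert A u Bv_lt[OF xc], auto simp: pr_def p_def \<tau>_def)
    have Ap: "A *\<^sub>v p \<in> carrier_vec n" using A p by auto
    have xBx: "x \<bullet> (B *\<^sub>v x) = p \<bullet> (A *\<^sub>v p) + 2 * \<tau> * (u \<bullet> p) + \<alpha> * \<tau>^2"
    proof -
      have "x \<bullet> (B *\<^sub>v x) = p \<bullet> (A *\<^sub>v p + \<tau> \<cdot>\<^sub>v u) + \<tau> * (u \<bullet> p + \<alpha> * \<tau>)"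
        using split_prod[OF xc Bxc] prBx Bv_n[OF xc] unfolding p_def \<tau>_def pr_def[symmetric] by simp
      also have "\<dots> = p \<bullet> (A *\<^sub>v p) + \<tau> * (p \<bullet> u) + \<tau> * (u \<bullet> p) + \<alpha> * \<tau>^2"
        using p Ap u by (simp add: scalar_prod_add_distrib[of _ n] power2_eq_square algebra_simps)
      also have "p \<bullet> u = u \<bullet> p" using comm_scalar_prod[OF p u] .
      finally show ?thesis by simp
    qed
    define z where "z = p + \<tau> \<cdot>\<^sub>v w"
    have z: "z \<in> carrier_vec n" using p w z_def by auto
    have Az: "A *\<^sub>v z = A *\<^sub>v p + \<tau> \<cdot>\<^sub>v u"
      unfolding z_def using A p w Aw
      by (simp add: mult_add_distrib_mat_vec[of _ n n] mult_mat_vec[of _ n n])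
    have zAz: "z \<bullet> (A *\<^sub>v z) = p \<bullet> (A *\<^sub>v p) + 2 * \<tau> * (u \<bullet> p) + \<alpha> * \<tau>^2"
    proof -
      have "z \<bullet> (A *\<^sub>v z) = p \<bullet> (A *\<^sub>v p) + \<tau> * (p \<bullet> u) + \<tau> * (w \<bullet> (A *\<^sub>v p)) + \<tau> * \<tau> * (w \<bullet> u)"
        unfolding Az unfolding z_def using p w u Ap
        by (simp add: scalar_prod_add_distrib[of _ n] add_scalar_prod_distrib[of _ n] algebra_simps)
      also have "w \<bullet> (A *\<^sub>v p) = p \<bullet> u" using sym_form[OF A sym w p] Aw by simp
      also have "p \<bullet> u = u \<bullet> p" using comm_scalar_prod[OF p u] .
      also have "w \<bullet> u = \<alpha>" unfolding \<alpha>_def using comm_scalar_prod[OF w u] .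
      finally show ?thesis by (simp add: power2_eq_square algebra_simps)
    qed
    have psd: "\<And>v. v \<in> carrier_vec n \<Longrightarrow> 0 \<le> v \<bullet> (A *\<^sub>v v)"
      using psd_Mmat[OF A sym assms(4)] .
    have "z \<bullet> (A *\<^sub>v z) = 0" using psd[OF z] le0 xBx zAz by simp
    from psd_zero[OF A sym psd z this] have Az0: "A *\<^sub>v z = 0\<^sub>v n" .
    have "z = Ai *\<^sub>v (A *\<^sub>v z)" using AiA A Ai z
      by (metis assoc_mult_mat_vec one_mult_mat_vec)
    moreover have "Ai *\<^sub>v 0\<^sub>v n = 0\<^sub>v n" using Ai by (intro eq_vecI, auto)
    ultimately have z0: "z = 0\<^sub>v n" using Az0 by simp
    have pw: "p = (- \<tau>) \<cdot>\<^sub>v w"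
    proof (rule eq_vecI)
      fix i assume "i < dim_vec ((- \<tau>) \<cdot>\<^sub>v w)"
      hence i: "i < n" using w by simp
      have "z $ i = 0" using z0 i by simp
      thus "p $ i = ((- \<tau>) \<cdot>\<^sub>v w) $ i" unfolding z_def using i p w by simp
    qed (insert p w, auto)
    have Bx0: "B *\<^sub>v x = 0\<^sub>v (Suc n)"
    proof (rule eq_vecI)
      fix i assume "i < dim_vec (0\<^sub>v (Suc n))"
      hence i: "i < Suc n" by simp
      show "(B *\<^sub>v x) $ i = 0\<^sub>v (Suc n) $ i"
      proof (cases "i < n")
        case True
        have "(A *\<^sub>v z) $ i = 0" using Az0 True by simp
        thus ?thesis using Bv_lt[OF xc True] Az True A u unfolding p_def \<tau>_def by (simp add: mult.commute)
      next
        case False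
        hence "i = n" using i by simp
        have "u \<bullet> p = - \<tau> * \<alpha>" unfolding pw \<alpha>_def using u w by simp
        thus ?thesis using Bv_n[OF xc] \<open>i = n\<close> unfolding p_def \<tau>_def by simp
      qed
    qed (insert B, auto)
    have "x \<bullet> x = x \<bullet> (B *\<^sub>v y)" using xy by simp
    also have "\<dots> = (transpose_mat B *\<^sub>v x) \<bullet> y"
      using transpose_vec_mult_scalar[OF B y xc] by simp
    also have "\<dots> = 0" unfolding Bsym Bx0 using y by simp
    finally have "x = 0\<^sub>v (Suc n)" using self_prod_zero[OF xc] by simp
    thus "x = 0\<^sub>v (dim_row B)" using B by simp
  qed
qed

end
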